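(* Let $\mathcal{C}$ be an additive category with an automorphism $\Sigma$, let $n\ge3$, and let $\mathscr{N}$ be a collection of $n$-$\Sigma$-sequences in $\mathcal{C}$ satisfying the axioms (N1* ) and (N3). Then $\mathscr{N}$ satisfies (N2) if and only if $\mathscr{N}$ satisfies (N2* ).
   Context: $\mathcal{C}$ is an additive category, $\Sigma\colon\mathcal{C}\to\mathcal{C}$ an automorphism, $n\ge3$. An $n$-$\Sigma$-sequence $A_\bullet$ is a diagram $A_1\xrightarrow{\alpha_1}A_2\to\cdots\xrightarrow{\alpha_{n-1}}A_n\xrightarrow{\alpha_n}\Sigma A_1$. It is exact if for every object $B$ the doubly infinite sequence of abelian groups $\cdots\to\mathrm{Hom}(B,\Sigma^iA_1)\xrightarrow{(\Sigma^i\alpha_1)_*}\mathrm{Hom}(B,\Sigma^iA_2)\to\cdots\xrightarrow{(\Sigma^i\alpha_n)_*}\mathrm{Hom}(B,\Sigma^{i+1}A_1)\to\cdots$ ($i\in\mathbb{Z}$) is exact. The left rotation of $A_\bullet$ is $A_2\xrightarrow{\alpha_2}\cdots\xrightarrow{\alpha_n}\Sigma A_1\xrightarrow{(-1)^n\Sigma\alpha_1}\Sigma A_2$. A morphism $(\varphi_1,\dots,\varphi_n)\colon A_\bullet\to B_\bullet$ consists of $\varphi_i\colon A_i\to B_i$ with $\varphi_{i+1}\alpha_i=\beta_i\varphi_i$ ($1\le i\le n-1$) and $\Sigma\varphi_1\circ\alpha_n=\beta_n\varphi_n$; it is a weak isomorphism if $\varphi_i$ and $\varphi_{i+1}$ are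 isomorphisms for some $1\le i\le n$ (with $\varphi_{n+1}:=\Sigma\varphi_1$). Axioms for a collection $\mathscr{N}$: (N1* ): (a) if $A_\bullet\to B_\bullet$ is a weak isomorphism of exact $n$-$\Sigma$-sequences with $A_\bullet\in\mathscr{N}$, then $B_\bullet\in\mathscr{N}$; (b) for all objects $A$, the trivial sequence $A\xrightarrow{1}A\to0\to\cdots\to0\to\Sigma A$ is in $\mathscr{N}$; (c) every morphism $\alpha\colon A_1\to A_2$ is the first morphism of some sequence in $\mathscr{N}$. (N2): an $n$-$\Sigma$-sequence is in $\mathscr{N}$ if and only if its left rotation is in $\mathscr{N}$. (N2* ): the left rotation of every sequence in $\mathscr{N}$ is in $\mathscr{N}$. (N3): given $A_\bullet,B_\bullet\in\mathscr{N}$ and $\varphi_1\colon A_1\to B_1$, $\varphi_2\colon A_2\to B_2$ with $\varphi_2\alpha_1=\beta_1\varphi_1$, there exist $\varphi_3,\dots,\varphi_n$ making $(\varphi_1,\dots,\varphi_n)$ a morphism of $n$-$\Sigma$-sequences. *)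

theory Defs
  imports Main
begin

text \<open>All operations are indexed by the objects involved, so hom-sets of different
pairs of objects need not be disjoint.  cmp A B C g f is the composite g o f of
f : A \<rightarrow> B and g : B \<rightarrow> C.\<close>

record ('o, 'm) addcat =
  hom :: "'o \<Rightarrow> 'o \<Rightarrow> 'm set"
  cmp :: "'o \<Rightarrow> 'o \<Rightarrow> 'o \<Rightarrow> 'm \<Rightarrow> 'm \<Rightarrow> 'm"
  idm :: "'o \<Rightarrow> 'm"
  pls :: "'o \<Rightarrow> 'o \<Rightarrow> 'm \<Rightarrow> 'm \<Rightarrow> 'm"
  zro :: "'o \<Rightarrow> 'o \<Rightarrow> 'm"
  ngt :: "'o \<Rightarrow> 'o \<Rightarrow> 'm \<Rightarrow> 'm"

definition is_category :: "('o, 'm) addcat \<Rightarrow> bool" where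
  "is_category C \<longleftrightarrow>
     (\<forall>A B D f g. f \<in> hom C A B \<longrightarrow> g \<in> hom C B D \<longrightarrow> cmp C A B D g f \<in> hom C A D) \<and>
     (\<forall>A B D E f g h. f \<in> hom C A B \<longrightarrow> g \<in> hom C B D \<longrightarrow> h \<in> hom C D E \<longrightarrow>
        cmp C A D E h (cmp C A B D g f) = cmp C A B E (cmp C B D E h g) f) \<and>
     (\<forall>A. idm C A \<in> hom C A A) \<and>
     (\<forall>A B f. f \<in> hom C A B \<longrightarrow> cmp C A B B (idm C B) f = f \<and> cmp C A A B f (idm C A) = f)"

definition is_preadditive :: "('o, 'm) addcat \<Rightarrow> bool" where
  "is_preadditive C \<longleftrightarrow> is_category C \<and>
     (\<forall>A B. zro C A B \<in> hom C A B) \<and>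
     (\<forall>A B f g. f \<in> hom C A B \<longrightarrow> g \<in> hom C A B \<longrightarrow> pls C A B f g \<in> hom C A B) \<and>
     (\<forall>A B f. f \<in> hom C A B \<longrightarrow> ngt C A B f \<in> hom C A B) \<and>
     (\<forall>A B f g h. f \<in> hom C A B \<longrightarrow> g \<in> hom C A B \<longrightarrow> h \<in> hom C A B \<longrightarrow>
        pls C A B (pls C A B f g) h = pls C A B f (pls C A B g h)) \<and>
     (\<forall>A B f g. f \<in> hom C A B \<longrightarrow> g \<in> hom C A B \<longrightarrow> pls C A B f g = pls C A B g f) \<and>
     (\<forall>A B f. f \<in> hom C A B \<longrightarrow> pls C A B (zro C A B) f = f) \<and>
     (\<forall>A B f. f \<in> hom C A B \<longrightarrow> pls C A B (ngt C A B f) f = zro C A B) \<and>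
     (\<forall>A B D f g g'. f \<in> hom C A B \<longrightarrow> g \<in> hom C B D \<longrightarrow> g' \<in> hom C B D \<longrightarrow>
        cmp C A B D (pls C B D g g') f = pls C A D (cmp C A B D g f) (cmp C A B D g' f)) \<and>
     (\<forall>A B D f f' g. f \<in> hom C A B \<longrightarrow> f' \<in> hom C A B \<longrightarrow> g \<in> hom C B D \<longrightarrow>
        cmp C A B D g (pls C A B f f') = pls C A D (cmp C A B D g f) (cmp C A B D g f'))"

definition is_zero_object :: "('o, 'm) addcat \<Rightarrow> 'o \<Rightarrow> bool" where
  "is_zero_object C Z \<longleftrightarrow> (\<forall>A. hom C Z A = {zro C Z A} \<and> hom C A Z = {zro C A Z})"

definition is_biproduct :: "('o, 'm) addcat \<Rightarrow> 'o \<Rightarrow> 'o \<Rightarrow> 'o \<Rightarrow> 'm \<Rightarrow> 'm \<Rightarrow> 'm \<Rightarrow> 'm \<Rightarrow> bool" where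
  "is_biproduct C A B P i1 i2 p1 p2 \<longleftrightarrow>
     i1 \<in> hom C A P \<and> i2 \<in> hom C B P \<and> p1 \<in> hom C P A \<and> p2 \<in> hom C P B \<and>
     cmp C A P A p1 i1 = idm C A \<and> cmp C B P B p2 i2 = idm C B \<and>
     pls C P P (cmp C P A P i1 p1) (cmp C P B P i2 p2) = idm C P"

definition is_additive_category :: "('o, 'm) addcat \<Rightarrow> bool" where
  "is_additive_category C \<longleftrightarrow> is_preadditive C \<and>
     (\<exists>Z. is_zero_object C Z) \<and>
     (\<forall>A B. \<exists>P i1 i2 p1 p2. is_biproduct C A B P i1 i2 p1 p2)"

definition is_iso :: "('o, 'm) addcat \<Rightarrow> 'o \<Rightarrow> 'o \<Rightarrow> 'm \<Rightarrow> bool" where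
  "is_iso C A B f \<longleftrightarrow> f \<in> hom C A B \<and>
     (\<exists>g \<in> hom C B A. cmp C A B A g f = idm C A \<and> cmp C B A B f g = idm C B)"

text \<open>An automorphism \<Sigma> is given by its object part So and morphism part Sm
(Sm A B maps hom A B to hom (So A) (So B)); it is a functor which is an isomorphism
of categories.\<close>

definition is_automorphism :: "('o, 'm) addcat \<Rightarrow> ('o \<Rightarrow> 'o) \<Rightarrow> ('o \<Rightarrow> 'o \<Rightarrow> 'm \<Rightarrow> 'm) \<Rightarrow> bool" where
  "is_automorphism C So Sm \<longleftrightarrow>
     (\<forall>A B f. f \<in> hom C A B \<longrightarrow> Sm A B f \<in> hom C (So A) (So B)) \<and>
     (\<forall>A. Sm A A (idm C A) = idm C (So A)) \<and>
     (\<forall>A B D f g. f \<in> hom C A B \<longrightarrow> g \<in> hom C B D \<longrightarrow>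
        Sm A D (cmp C A B D g f) = cmp C (So A) (So B) (So D) (Sm B D g) (Sm A B f)) \<and>
     bij So \<and>
     (\<forall>A B. bij_betw (Sm A B) (hom C A B) (hom C (So A) (So B)))"

definition Sinv_obj :: "('o \<Rightarrow> 'o) \<Rightarrow> 'o \<Rightarrow> 'o" where
  "Sinv_obj So = inv So"

definition Sinv_mor :: "('o, 'm) addcat \<Rightarrow> ('o \<Rightarrow> 'o) \<Rightarrow> ('o \<Rightarrow> 'o \<Rightarrow> 'm \<Rightarrow> 'm) \<Rightarrow> 'o \<Rightarrow> 'o \<Rightarrow> 'm \<Rightarrow> 'm" where
  "Sinv_mor C So Sm X Y g =
     inv_into (hom C (Sinv_obj So X) (Sinv_obj So Y)) (Sm (Sinv_obj So X) (Sinv_obj So Y)) g"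

definition shift_obj :: "('o \<Rightarrow> 'o) \<Rightarrow> int \<Rightarrow> 'o \<Rightarrow> 'o" where
  "shift_obj So i X = (if 0 \<le> i then (So ^^ nat i) X else (Sinv_obj So ^^ nat (- i)) X)"

fun shift_mor_pos :: "('o \<Rightarrow> 'o) \<Rightarrow> ('o \<Rightarrow> 'o \<Rightarrow> 'm \<Rightarrow> 'm) \<Rightarrow> nat \<Rightarrow> 'o \<Rightarrow> 'o \<Rightarrow> 'm \<Rightarrow> 'm" where
  "shift_mor_pos So Sm 0 X Y f = f"
| "shift_mor_pos So Sm (Suc k) X Y f = Sm ((So ^^ k) X) ((So ^^ k) Y) (shift_mor_pos So Sm k X Y f)"

fun shift_mor_neg :: "('o, 'm) addcat \<Rightarrow> ('o \<Rightarrow> 'o) \<Rightarrow> ('o \<Rightarrow> 'o \<Rightarrow> 'm \<Rightarrow> 'm) \<Rightarrow> nat \<Rightarrow> 'o \<Rightarrow> 'o \<Rightarrow> 'm \<Rightarrow> 'm" where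
  "shift_mor_neg C So Sm 0 X Y f = f"
| "shift_mor_neg C So Sm (Suc k) X Y f =
     Sinv_mor C So Sm ((Sinv_obj So ^^ k) X) ((Sinv_obj So ^^ k) Y) (shift_mor_neg C So Sm k X Y f)"

definition shift_mor :: "('o, 'm) addcat \<Rightarrow> ('o \<Rightarrow> 'o) \<Rightarrow> ('o \<Rightarrow> 'o \<Rightarrow> 'm \<Rightarrow> 'm) \<Rightarrow> int \<Rightarrow> 'o \<Rightarrow> 'o \<Rightarrow> 'm \<Rightarrow> 'm" where
  "shift_mor C So Sm i X Y f =
     (if 0 \<le> i then shift_mor_pos So Sm (nat i) X Y f else shift_mor_neg C So Sm (nat (- i)) X Y f)"

text \<open>An n-\<Sigma>-sequence A_1 \<rightarrow> ... \<rightarrow> A_n \<rightarrow> \<Sigma>A_1 is a pair (As, \<alpha>s) of lists of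
length n, 0-indexed: As!j = A_(j+1), \<alpha>s!j = \<alpha>_(j+1).  seq_tgt So As j is the
codomain of \<alpha>_(j+1).\<close>

type_synonym ('o, 'm) sigseq = "'o list \<times> 'm list"

definition seq_tgt :: "('o \<Rightarrow> 'o) \<Rightarrow> 'o list \<Rightarrow> nat \<Rightarrow> 'o" where
  "seq_tgt So As j = (if Suc j < length As then As ! Suc j else So (As ! 0))"

definition is_sigseq :: "('o, 'm) addcat \<Rightarrow> ('o \<Rightarrow> 'o) \<Rightarrow> nat \<Rightarrow> ('o, 'm) sigseq \<Rightarrow> bool" where
  "is_sigseq C So n S \<longleftrightarrow> length (fst S) = n \<and> length (snd S) = n \<and>
     (\<forall>j < n. snd S ! j \<in> hom C (fst S ! j) (seq_tgt So (fst S) j))"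

text \<open>Exactness of Hom(B,W) \<rightarrow> Hom(B,X) \<rightarrow> Hom(B,Y) at Hom(B,X), for u : W \<rightarrow> X, v : X \<rightarrow> Y.\<close>

definition hom_exact_at :: "('o, 'm) addcat \<Rightarrow> 'o \<Rightarrow> 'o \<Rightarrow> 'o \<Rightarrow> 'o \<Rightarrow> 'm \<Rightarrow> 'm \<Rightarrow> bool" where
  "hom_exact_at C B W X Y u v \<longleftrightarrow>
     {h \<in> hom C B X. cmp C B X Y v h = zro C B Y} = cmp C B W X u ` hom C B W"

text \<open>Position p \<in> \<int> of the doubly infinite sequence: p = i*n + j (0 \<le> j < n)
corresponds to the term Hom(B, \<Sigma>^i A_(j+1)), and the outgoing map is (\<Sigma>^i \<alpha>_(j+1))_*.\<close>

definition seq_pos_obj :: "('o \<Rightarrow> 'o) \<Rightarrow> nat \<Rightarrow> ('o, 'm) sigseq \<Rightarrow> int \<Rightarrow> 'o" where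
  "seq_pos_obj So n S p = shift_obj So (p div int n) (fst S ! nat (p mod int n))"

definition seq_pos_mor :: "('o, 'm) addcat \<Rightarrow> ('o \<Rightarrow> 'o) \<Rightarrow> ('o \<Rightarrow> 'o \<Rightarrow> 'm \<Rightarrow> 'm) \<Rightarrow> nat \<Rightarrow> ('o, 'm) sigseq \<Rightarrow> int \<Rightarrow> 'm" where
  "seq_pos_mor C So Sm n S p =
     shift_mor C So Sm (p div int n) (fst S ! nat (p mod int n))
       (seq_tgt So (fst S) (nat (p mod int n))) (snd S ! nat (p mod int n))"

definition is_exact_sigseq :: "('o, 'm) addcat \<Rightarrow> ('o \<Rightarrow> 'o) \<Rightarrow> ('o \<Rightarrow> 'o \<Rightarrow> 'm \<Rightarrow> 'm) \<Rightarrow> nat \<Rightarrow> ('o, 'm) sigseq \<Rightarrow> bool" where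
  "is_exact_sigseq C So Sm n S \<longleftrightarrow> is_sigseq C So n S \<and>
     (\<forall>B p. hom_exact_at C B (seq_pos_obj So n S (p - 1)) (seq_pos_obj So n S p) (seq_pos_obj So n S (p + 1))
              (seq_pos_mor C So Sm n S (p - 1)) (seq_pos_mor C So Sm n S p))"

definition left_rotation :: "('o, 'm) addcat \<Rightarrow> ('o \<Rightarrow> 'o) \<Rightarrow> ('o \<Rightarrow> 'o \<Rightarrow> 'm \<Rightarrow> 'm) \<Rightarrow> nat \<Rightarrow> ('o, 'm) sigseq \<Rightarrow> ('o, 'm) sigseq" where
  "left_rotation C So Sm n S =
     (let As = fst S; \<alpha>s = snd S; s\<alpha> = Sm (As ! 0) (As ! 1) (\<alpha>s ! 0) in
      (tl As @ [So (As ! 0)],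
       tl \<alpha>s @ [if even n then s\<alpha> else ngt C (So (As ! 0)) (So (As ! 1)) s\<alpha>]))"

text \<open>Morphisms (\<phi>_1,...,\<phi>_n) of n-\<Sigma>-sequences, \<phi>s!j = \<phi>_(j+1).\<close>

definition is_sigseq_mor :: "('o, 'm) addcat \<Rightarrow> ('o \<Rightarrow> 'o) \<Rightarrow> ('o \<Rightarrow> 'o \<Rightarrow> 'm \<Rightarrow> 'm) \<Rightarrow> nat \<Rightarrow>
    ('o, 'm) sigseq \<Rightarrow> ('o, 'm) sigseq \<Rightarrow> 'm list \<Rightarrow> bool" where
  "is_sigseq_mor C So Sm n S T \<phi>s \<longleftrightarrow> length \<phi>s = n \<and>
     (\<forall>j < n. \<phi>s ! j \<in> hom C (fst S ! j) (fst T ! j)) \<and>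
     (\<forall>j. Suc j < n \<longrightarrow>
        cmp C (fst S ! j) (fst S ! Suc j) (fst T ! Suc j) (\<phi>s ! Suc j) (snd S ! j) =
        cmp C (fst S ! j) (fst T ! j) (fst T ! Suc j) (snd T ! j) (\<phi>s ! j)) \<and>
     cmp C (fst S ! (n - 1)) (So (fst S ! 0)) (So (fst T ! 0))
        (Sm (fst S ! 0) (fst T ! 0) (\<phi>s ! 0)) (snd S ! (n - 1)) =
     cmp C (fst S ! (n - 1)) (fst T ! (n - 1)) (So (fst T ! 0)) (snd T ! (n - 1)) (\<phi>s ! (n - 1))"

text \<open>Weak isomorphism: \<phi>_i and \<phi>_(i+1) are isomorphisms for some 1 \<le> i \<le> n,
where \<phi>_(n+1) = \<Sigma>\<phi>_1.\<close>

definition is_weak_iso :: "('o, 'm) addcat \<Rightarrow> ('o \<Rightarrow> 'o) \<Rightarrow> ('o \<Rightarrow> 'o \<Rightarrow> 'm \<Rightarrow> 'm) \<Rightarrow> nat \<Rightarrow>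
    ('o, 'm) sigseq \<Rightarrow> ('o, 'm) sigseq \<Rightarrow> 'm list \<Rightarrow> bool" where
  "is_weak_iso C So Sm n S T \<phi>s \<longleftrightarrow> is_sigseq_mor C So Sm n S T \<phi>s \<and>
     (\<exists>j < n. is_iso C (fst S ! j) (fst T ! j) (\<phi>s ! j) \<and>
        (if Suc j < n then is_iso C (fst S ! Suc j) (fst T ! Suc j) (\<phi>s ! Suc j)
         else is_iso C (So (fst S ! 0)) (So (fst T ! 0)) (Sm (fst S ! 0) (fst T ! 0) (\<phi>s ! 0))))"

definition trivial_sigseq :: "('o, 'm) addcat \<Rightarrow> ('o \<Rightarrow> 'o) \<Rightarrow> nat \<Rightarrow> 'o \<Rightarrow> 'o \<Rightarrow> ('o, 'm) sigseq" where
  "trivial_sigseq C So n Z A =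
     ([A, A] @ replicate (n - 2) Z,
      [idm C A, zro C A Z] @ replicate (n - 3) (zro C Z Z) @ [zro C Z (So A)])"

definition N1_star :: "('o, 'm) addcat \<Rightarrow> ('o \<Rightarrow> 'o) \<Rightarrow> ('o \<Rightarrow> 'o \<Rightarrow> 'm \<Rightarrow> 'm) \<Rightarrow> nat \<Rightarrow> ('o, 'm) sigseq set \<Rightarrow> bool" where
  "N1_star C So Sm n N \<longleftrightarrow>
     (\<forall>S T \<phi>s. is_exact_sigseq C So Sm n S \<longrightarrow> is_exact_sigseq C So Sm n T \<longrightarrow>
        is_weak_iso C So Sm n S T \<phi>s \<longrightarrow> S \<in> N \<longrightarrow> T \<in> N) \<and>
     (\<forall>A Z. is_zero_object C Z \<longrightarrow> trivial_sigseq C So n Z A \<in> N) \<and>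
     (\<forall>A1 A2 \<alpha>. \<alpha> \<in> hom C A1 A2 \<longrightarrow>
        (\<exists>S \<in> N. fst S ! 0 = A1 \<and> fst S ! 1 = A2 \<and> snd S ! 0 = \<alpha>))"

definition N2 :: "('o, 'm) addcat \<Rightarrow> ('o \<Rightarrow> 'o) \<Rightarrow> ('o \<Rightarrow> 'o \<Rightarrow> 'm \<Rightarrow> 'm) \<Rightarrow> nat \<Rightarrow> ('o, 'm) sigseq set \<Rightarrow> bool" where
  "N2 C So Sm n N \<longleftrightarrow>
     (\<forall>S. is_sigseq C So n S \<longrightarrow> (S \<in> N \<longleftrightarrow> left_rotation C So Sm n S \<in> N))"

definition N2_star :: "('o, 'm) addcat \<Rightarrow> ('o \<Rightarrow> 'o) \<Rightarrow> ('o \<Rightarrow> 'o \<Rightarrow> 'm \<Rightarrow> 'm) \<Rightarrow> nat \<Rightarrow> ('o, 'm) sigseq set \<Rightarrow> bool" where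
  "N2_star C So Sm n N \<longleftrightarrow> (\<forall>S \<in> N. left_rotation C So Sm n S \<in> N)"

definition N3 :: "('o, 'm) addcat \<Rightarrow> ('o \<Rightarrow> 'o) \<Rightarrow> ('o \<Rightarrow> 'o \<Rightarrow> 'm \<Rightarrow> 'm) \<Rightarrow> nat \<Rightarrow> ('o, 'm) sigseq set \<Rightarrow> bool" where
  "N3 C So Sm n N \<longleftrightarrow>
     (\<forall>S \<in> N. \<forall>T \<in> N. \<forall>\<phi>1 \<phi>2.
        \<phi>1 \<in> hom C (fst S ! 0) (fst T ! 0) \<longrightarrow> \<phi>2 \<in> hom C (fst S ! 1) (fst T ! 1) \<longrightarrow>
        cmp C (fst S ! 0) (fst S ! 1) (fst T ! 1) \<phi>2 (snd S ! 0) =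
        cmp C (fst S ! 0) (fst T ! 0) (fst T ! 1) (snd T ! 0) \<phi>1 \<longrightarrow>
        (\<exists>\<phi>s. is_sigseq_mor C So Sm n S T \<phi>s \<and> \<phi>s ! 0 = \<phi>1 \<and> \<phi>s ! 1 = \<phi>2))"

end

theory Submission
  imports Defs
begin



locale ac =
  fixes C :: "('o,'m) addcat" and So :: "'o \<Rightarrow> 'o" and Sm :: "'o \<Rightarrow> 'o \<Rightarrow> 'm \<Rightarrow> 'm" and n :: nat
  assumes add: "is_additive_category C" and aut: "is_automorphism C So Sm" and n3: "3 \<le> n"
begin

lemma cat: "is_category C" using add unfolding is_additive_category_def is_preadditive_def by blast
lemma pre: "is_preadditive C" using add unfolding is_additive_category_def by blast

lemmas PA = pre[unfolded is_preadditive_def, THEN conjunct2]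
lemmas PA0 = PA[THEN conjunct1]
lemmas PA1 = PA[THEN conjunct2, THEN conjunct1]
lemmas PA2 = PA[THEN conjunct2, THEN conjunct2, THEN conjunct1]
lemmas PA3 = PA[THEN conjunct2, THEN conjunct2, THEN conjunct2, THEN conjunct1]
lemmas PA4 = PA[THEN conjunct2, THEN conjunct2, THEN conjunct2, THEN conjunct2, THEN conjunct1]
lemmas PA5 = PA[THEN conjunct2, THEN conjunct2, THEN conjunct2, THEN conjunct2, THEN conjunct2, THEN conjunct1]
lemmas PA6 = PA[THEN conjunct2, THEN conjunct2, THEN conjunct2, THEN conjunct2, THEN conjunct2, THEN conjunct2, THEN conjunct1]
lemmas PA7 = PA[THEN conjunct2, THEN conjunct2, THEN conjunct2, THEN conjunct2, THEN conjunct2, THEN conjunct2, THEN conjunct2, THEN conjunct1]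
lemmas PA8 = PA[THEN conjunct2, THEN conjunct2, THEN conjunct2, THEN conjunct2, THEN conjunct2, THEN conjunct2, THEN conjunct2, THEN conjunct2]

lemma cmp_hom: "f \<in> hom C A B \<Longrightarrow> g \<in> hom C B D \<Longrightarrow> cmp C A B D g f \<in> hom C A D"
  using cat unfolding is_category_def by blast
lemma assoc: "f \<in> hom C A B \<Longrightarrow> g \<in> hom C B D \<Longrightarrow> h \<in> hom C D E \<Longrightarrow>
        cmp C A D E h (cmp C A B D g f) = cmp C A B E (cmp C B D E h g) f"
  using cat unfolding is_category_def by blast
lemma idm_hom: "idm C A \<in> hom C A A" using cat unfolding is_category_def by blast
lemma id_l: "f \<in> hom C A B \<Longrightarrow> cmp C A B B (idm C B) f = f" using cat unfolding is_category_def by blast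
lemma id_r: "f \<in> hom C A B \<Longrightarrow> cmp C A A B f (idm C A) = f" using cat unfolding is_category_def by blast
lemma zro_hom: "zro C A B \<in> hom C A B" using PA0 by blast
lemma pls_hom: "f \<in> hom C A B \<Longrightarrow> g \<in> hom C A B \<Longrightarrow> pls C A B f g \<in> hom C A B" using PA1 by blast
lemma ngt_hom: "f \<in> hom C A B \<Longrightarrow> ngt C A B f \<in> hom C A B" using PA2 by blast
lemma pls_assoc: "f \<in> hom C A B \<Longrightarrow> g \<in> hom C A B \<Longrightarrow> h \<in> hom C A B \<Longrightarrow>
        pls C A B (pls C A B f g) h = pls C A B f (pls C A B g h)" using PA3 by blast
lemma pls_comm: "f \<in> hom C A B \<Longrightarrow> g \<in> hom C A B \<Longrightarrow> pls C A B f g = pls C A B g f" using PA4 by blast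
lemma zro_pls: "f \<in> hom C A B \<Longrightarrow> pls C A B (zro C A B) f = f" using PA5 by blast
lemma ngt_pls: "f \<in> hom C A B \<Longrightarrow> pls C A B (ngt C A B f) f = zro C A B" using PA6 by blast
lemma dist_l: "f \<in> hom C A B \<Longrightarrow> g \<in> hom C B D \<Longrightarrow> g' \<in> hom C B D \<Longrightarrow>
        cmp C A B D (pls C B D g g') f = pls C A D (cmp C A B D g f) (cmp C A B D g' f)" using PA7 by blast
lemma dist_r: "f \<in> hom C A B \<Longrightarrow> f' \<in> hom C A B \<Longrightarrow> g \<in> hom C B D \<Longrightarrow>
        cmp C A B D g (pls C A B f f') = pls C A D (cmp C A B D g f) (cmp C A B D g f')" using PA8 by blast

lemma pls_zro: "f \<in> hom C A B \<Longrightarrow> pls C A B f (zro C A B) = f"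
  by (metis pls_comm zro_hom zro_pls)
lemma cancel: assumes "a \<in> hom C A B" "b \<in> hom C A B" "c \<in> hom C A B" "pls C A B a b = pls C A B a c"
  shows "b = c"
proof -
  have "b = pls C A B (pls C A B (ngt C A B a) a) b" using assms by (simp add: ngt_pls zro_pls)
  also have "\<dots> = pls C A B (ngt C A B a) (pls C A B a b)" using assms by (simp add: pls_assoc ngt_hom)
  also have "\<dots> = pls C A B (pls C A B (ngt C A B a) a) c" using assms by (simp add: pls_assoc ngt_hom)
  also have "\<dots> = c" using assms by (simp add: ngt_pls zro_pls)
  finally show ?thesis .
qed
lemma idem_zero: "x \<in> hom C A B \<Longrightarrow> pls C A B x x = x \<Longrightarrow> x = zro C A B"
  by (metis cancel pls_zro zro_hom)
lemma cmp_zro_r: assumes "g \<in> hom C B D" shows "cmp C A B D g (zro C A B) = zro C A D"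
proof -
  have "pls C A D (cmp C A B D g (zro C A B)) (cmp C A B D g (zro C A B)) = cmp C A B D g (zro C A B)"
    using assms by (metis dist_r zro_hom zro_pls)
  thus ?thesis using assms by (meson cmp_hom idem_zero zro_hom)
qed
lemma cmp_zro_l: assumes "f \<in> hom C A B" shows "cmp C A B D (zro C B D) f = zro C A D"
proof -
  have "pls C A D (cmp C A B D (zro C B D) f) (cmp C A B D (zro C B D) f) = cmp C A B D (zro C B D) f"
    using assms by (metis dist_l zro_hom zro_pls)
  thus ?thesis using assms by (meson cmp_hom idem_zero zro_hom)
qed
lemma inv_unique: assumes "a \<in> hom C A B" "b \<in> hom C A B" "pls C A B a b = zro C A B" shows "a = ngt C A B b"
proof -
  have "pls C A B b a = pls C A B b (ngt C A B b)"
    using assms by (metis ngt_hom ngt_pls pls_comm)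
  thus ?thesis using assms by (meson cancel ngt_hom)
qed
lemma cmp_ngt_l: assumes "f \<in> hom C A B" "g \<in> hom C B D"
  shows "cmp C A B D (ngt C B D g) f = ngt C A D (cmp C A B D g f)"
proof -
  have "pls C A D (cmp C A B D (ngt C B D g) f) (cmp C A B D g f) = zro C A D"
    using assms by (metis dist_l ngt_hom ngt_pls cmp_zro_l)
  thus ?thesis using assms by (meson cmp_hom inv_unique ngt_hom)
qed
lemma cmp_ngt_r: assumes "f \<in> hom C A B" "g \<in> hom C B D"
  shows "cmp C A B D g (ngt C A B f) = ngt C A D (cmp C A B D g f)"
proof -
  have "pls C A D (cmp C A B D g (ngt C A B f)) (cmp C A B D g f) = zro C A D"
    using assms by (metis dist_r ngt_hom ngt_pls cmp_zro_r)
  thus ?thesis using assms by (meson cmp_hom inv_unique ngt_hom)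
qed
lemma ngt_ngt: "f \<in> hom C A B \<Longrightarrow> ngt C A B (ngt C A B f) = f"
  by (metis inv_unique ngt_hom ngt_pls pls_comm)
lemma ngt_zro_iff: "f \<in> hom C A B \<Longrightarrow> ngt C A B f = zro C A B \<longleftrightarrow> f = zro C A B"
  by (metis inv_unique ngt_ngt zro_hom zro_pls)
lemma ngt_inj: "f \<in> hom C A B \<Longrightarrow> g \<in> hom C A B \<Longrightarrow> ngt C A B f = ngt C A B g \<Longrightarrow> f = g"
  by (metis ngt_ngt)

lemma Sm_hom: "f \<in> hom C A B \<Longrightarrow> Sm A B f \<in> hom C (So A) (So B)" using aut unfolding is_automorphism_def by blast
lemma Sm_id: "Sm A A (idm C A) = idm C (So A)" using aut unfolding is_automorphism_def by blast
lemma Sm_cmp: "f \<in> hom C A B \<Longrightarrow> g \<in> hom C B D \<Longrightarrow>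
        Sm A D (cmp C A B D g f) = cmp C (So A) (So B) (So D) (Sm B D g) (Sm A B f)" using aut unfolding is_automorphism_def by blast
lemma So_bij: "bij So" using aut unfolding is_automorphism_def by blast
lemma Sm_bij: "bij_betw (Sm A B) (hom C A B) (hom C (So A) (So B))" using aut unfolding is_automorphism_def by blast
lemma Sm_inj: "f \<in> hom C A B \<Longrightarrow> g \<in> hom C A B \<Longrightarrow> Sm A B f = Sm A B g \<Longrightarrow> f = g"
  using Sm_bij unfolding bij_betw_def inj_on_def by blast
lemma Sm_img: "Sm A B ` hom C A B = hom C (So A) (So B)" using Sm_bij unfolding bij_betw_def by blast
definition SmI where "SmI A B g = inv_into (hom C A B) (Sm A B) g"
lemma SmI_hom: "g \<in> hom C (So A) (So B) \<Longrightarrow> SmI A B g \<in> hom C A B"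
  unfolding SmI_def by (metis Sm_img inv_into_into)
lemma Sm_SmI: "g \<in> hom C (So A) (So B) \<Longrightarrow> Sm A B (SmI A B g) = g"
  unfolding SmI_def by (metis Sm_img f_inv_into_f)
lemma So_inv1: "So (inv So x) = x" using So_bij by (simp add: bij_is_surj surj_f_inv_f)
lemma So_inv2: "inv So (So x) = x" using So_bij by (simp add: bij_is_inj inv_f_f)

lemma zero_ex: "\<exists>Z. is_zero_object C Z" using add unfolding is_additive_category_def by blast
lemma zro_factor: "is_zero_object C Z \<Longrightarrow> zro C A B = cmp C A Z B (zro C Z B) (zro C A Z)"
  by (simp add: cmp_zro_l zro_hom)
lemma So_zero: assumes "is_zero_object C Z" shows "is_zero_object C (So Z)"
  unfolding is_zero_object_def
proof
  fix A
  have e1: "hom C (So Z) A = Sm Z (inv So A) ` hom C Z (inv So A)" using Sm_img[of Z "inv So A"] So_inv1 by simp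
  have "hom C Z (inv So A) = {zro C Z (inv So A)}" using assms unfolding is_zero_object_def by blast
  hence "hom C (So Z) A = {Sm Z (inv So A) (zro C Z (inv So A))}" using e1 by simp
  hence h1: "hom C (So Z) A = {zro C (So Z) A}" using zro_hom[of "So Z" A] by auto
  have e2: "hom C A (So Z) = Sm (inv So A) Z ` hom C (inv So A) Z" using Sm_img[of "inv So A" Z] So_inv1 by simp
  have "hom C (inv So A) Z = {zro C (inv So A) Z}" using assms unfolding is_zero_object_def by blast
  hence "hom C A (So Z) = {Sm (inv So A) Z (zro C (inv So A) Z)}" using e2 by simp
  hence h2: "hom C A (So Z) = {zro C A (So Z)}" using zro_hom[of A "So Z"] by auto
  show "hom C (So Z) A = {zro C (So Z) A} \<and> hom C A (So Z) = {zro C A (So Z)}" using h1 h2 by blast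
qed
lemma Sm_zro: "Sm A B (zro C A B) = zro C (So A) (So B)"
proof -
  obtain Z where Z: "is_zero_object C Z" using zero_ex by blast
  have SZ: "is_zero_object C (So Z)" using So_zero Z by blast
  have "Sm A B (zro C A B) = Sm A B (cmp C A Z B (zro C Z B) (zro C A Z))"
    by (subst zro_factor[OF Z]) (rule refl)
  also have "\<dots> = cmp C (So A) (So Z) (So B) (Sm Z B (zro C Z B)) (Sm A Z (zro C A Z))"
    by (rule Sm_cmp; rule zro_hom)
  also have "Sm Z B (zro C Z B) = zro C (So Z) (So B)"
    using SZ Sm_hom[OF zro_hom[of Z B]] unfolding is_zero_object_def by blast
  also have "Sm A Z (zro C A Z) = zro C (So A) (So Z)"
    using SZ Sm_hom[OF zro_hom[of A Z]] unfolding is_zero_object_def by blast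
  also have "cmp C (So A) (So Z) (So B) (zro C (So Z) (So B)) (zro C (So A) (So Z)) = zro C (So A) (So B)"
    by (rule zro_factor[OF SZ, symmetric])
  finally show ?thesis .
qed

end


context ac begin

lemma nat_int_p1 [simp]: "nat (int m + 1) = Suc m" by (simp add: nat_add_distrib)

lemma Sinv_eq: "Sinv_obj So = inv So" by (simp add: Sinv_obj_def)

lemma inv_pow_So: "(inv So ^^ k) (So X) = So ((inv So ^^ k) X)"
  by (induction k) (simp_all add: So_inv1 So_inv2)

lemma pow_So: "(So ^^ k) (So X) = So ((So ^^ k) X)"
  by (induction k) simp_all

lemma shift_obj_succ: "shift_obj So (i+1) X = So (shift_obj So i X)"
proof (cases "0 \<le> i")
  case True
  hence "nat (i+1) = Suc (nat i)" by simp
  thus ?thesis using True by (simp add: shift_obj_def)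
next
  case False
  define k where "k = nat (-i) - 1"
  have k: "i = - int (Suc k)" using False unfolding k_def by simp
  have a: "shift_obj So (i+1) X = (inv So ^^ k) X"
    using k by (cases k) (auto simp: shift_obj_def Sinv_eq)
  have b: "shift_obj So i X = inv So ((inv So ^^ k) X)"
    using k by (simp add: shift_obj_def Sinv_eq)
  show ?thesis using a b by (simp add: So_inv1)
qed

lemma shift_obj_So: "shift_obj So i (So X) = So (shift_obj So i X)"
  by (simp add: shift_obj_def Sinv_eq inv_pow_So pow_So)

lemma shift_obj_0: "shift_obj So 0 X = X" by (simp add: shift_obj_def)

lemma pos_hom: "f \<in> hom C X Y \<Longrightarrow> shift_mor_pos So Sm k X Y f \<in> hom C ((So ^^ k) X) ((So ^^ k) Y)"
  by (induction k) (simp_all add: Sm_hom)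

lemma Sinv_mor_eq: "Sinv_mor C So Sm X Y g = SmI (inv So X) (inv So Y) g"
  by (simp add: Sinv_mor_def SmI_def Sinv_eq)

lemma Sinv_hom: "g \<in> hom C X Y \<Longrightarrow> Sinv_mor C So Sm X Y g \<in> hom C (inv So X) (inv So Y)"
  unfolding Sinv_mor_eq by (rule SmI_hom) (simp add: So_inv1)

lemma Sm_Sinv: "g \<in> hom C X Y \<Longrightarrow> Sm (inv So X) (inv So Y) (Sinv_mor C So Sm X Y g) = g"
  unfolding Sinv_mor_eq by (rule Sm_SmI) (simp add: So_inv1)

lemma neg_hom: "f \<in> hom C X Y \<Longrightarrow> shift_mor_neg C So Sm k X Y f \<in> hom C ((inv So ^^ k) X) ((inv So ^^ k) Y)"
  by (induction k) (simp_all add: Sinv_hom Sinv_eq)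

lemma shift_mor_hom: "f \<in> hom C X Y \<Longrightarrow> shift_mor C So Sm i X Y f \<in> hom C (shift_obj So i X) (shift_obj So i Y)"
  by (simp add: shift_mor_def shift_obj_def pos_hom neg_hom Sinv_eq)

lemma shift_mor_succ: assumes f: "f \<in> hom C X Y"
  shows "shift_mor C So Sm (i+1) X Y f = Sm (shift_obj So i X) (shift_obj So i Y) (shift_mor C So Sm i X Y f)"
proof (cases "0 \<le> i")
  case True
  hence "nat (i+1) = Suc (nat i)" by simp
  thus ?thesis using True by (simp add: shift_obj_def shift_mor_def)
next
  case False
  define k where "k = nat (-i) - 1"
  have k: "i = - int (Suc k)" using False unfolding k_def by simp
  have a: "shift_mor C So Sm (i+1) X Y f = shift_mor_neg C So Sm k X Y f"
    using k by (cases k) (auto simp: shift_mor_def)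
  have b: "shift_mor C So Sm i X Y f = Sinv_mor C So Sm ((inv So ^^ k) X) ((inv So ^^ k) Y) (shift_mor_neg C So Sm k X Y f)"
    using k by (simp add: shift_mor_def Sinv_eq)
  have c: "shift_obj So i X = inv So ((inv So ^^ k) X)" "shift_obj So i Y = inv So ((inv So ^^ k) Y)"
    using k by (simp_all add: shift_obj_def Sinv_eq)
  show ?thesis using a b c Sm_Sinv[OF neg_hom[OF f]] by simp
qed

lemma shift_mor_0: "shift_mor C So Sm 0 X Y f = f" by (simp add: shift_mor_def)
lemma shift_mor_1: "f \<in> hom C X Y \<Longrightarrow> shift_mor C So Sm 1 X Y f = Sm X Y f"
  using shift_mor_succ[of f X Y 0] by (simp add: shift_mor_0 shift_obj_0)
lemma shift_obj_1: "shift_obj So 1 X = So X"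
  using shift_obj_succ[of 0 X] by (simp add: shift_obj_0)

lemma n_pos: "0 < n" using n3 by simp

lemma divmod_help: fixes i r m :: int assumes "0 \<le> r" "r < m"
  shows "(i*m + r) div m = i" "(i*m + r) mod m = r"
  using assms by (simp_all add: add.commute)

end


context ac begin

lemma ngt_zro [simp]: "ngt C A B (zro C A B) = zro C A B" using ngt_zro_iff zro_hom by blast

lemma Sm_inj_on: "inj_on (Sm A B) (hom C A B)" using Sm_bij unfolding bij_betw_def by blast

lemma exact_Sm: assumes u: "u \<in> hom C W X" and v: "v \<in> hom C X Y"
  shows "hom_exact_at C B W X Y u v \<longleftrightarrow> hom_exact_at C (So B) (So W) (So X) (So Y) (Sm W X u) (Sm X Y v)"
proof -
  define K where "K = {h \<in> hom C B X. cmp C B X Y v h = zro C B Y}"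
  define I where "I = cmp C B W X u ` hom C B W"
  have KI: "K \<subseteq> hom C B X" "I \<subseteq> hom C B X" unfolding K_def I_def using u cmp_hom by auto
  have K': "{h \<in> hom C (So B) (So X). cmp C (So B) (So X) (So Y) (Sm X Y v) h = zro C (So B) (So Y)} = Sm B X ` K"
  proof (intro equalityI subsetI)
    fix h' assume "h' \<in> {h \<in> hom C (So B) (So X). cmp C (So B) (So X) (So Y) (Sm X Y v) h = zro C (So B) (So Y)}"
    hence h': "h' \<in> hom C (So B) (So X)" "cmp C (So B) (So X) (So Y) (Sm X Y v) h' = zro C (So B) (So Y)" by auto
    define h where "h = SmI B X h'"
    have h: "h \<in> hom C B X" "Sm B X h = h'" using h' SmI_hom Sm_SmI unfolding h_def by auto
    have "Sm B Y (cmp C B X Y v h) = Sm B Y (zro C B Y)" using h h' v by (simp add: Sm_cmp Sm_zro)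
    hence "cmp C B X Y v h = zro C B Y" using Sm_inj cmp_hom h v zro_hom by blast
    thus "h' \<in> Sm B X ` K" using h unfolding K_def by blast
  next
    fix h' assume "h' \<in> Sm B X ` K"
    then obtain h where h: "h \<in> hom C B X" "cmp C B X Y v h = zro C B Y" "h' = Sm B X h" unfolding K_def by blast
    thus "h' \<in> {h \<in> hom C (So B) (So X). cmp C (So B) (So X) (So Y) (Sm X Y v) h = zro C (So B) (So Y)}"
      using v by (simp add: Sm_hom Sm_cmp[symmetric] Sm_zro)
  qed
  have I': "cmp C (So B) (So W) (So X) (Sm W X u) ` hom C (So B) (So W) = Sm B X ` I"
  proof -
    have "cmp C (So B) (So W) (So X) (Sm W X u) ` hom C (So B) (So W)
        = cmp C (So B) (So W) (So X) (Sm W X u) ` Sm B W ` hom C B W" by (simp add: Sm_img)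
    also have "\<dots> = (\<lambda>g. Sm B X (cmp C B W X u g)) ` hom C B W"
      unfolding image_image using u by (intro image_cong refl) (simp add: Sm_cmp)
    also have "\<dots> = Sm B X ` I" unfolding I_def image_image ..
    finally show ?thesis .
  qed
  have "K = I \<longleftrightarrow> Sm B X ` K = Sm B X ` I" using inj_on_image_eq_iff[OF Sm_inj_on KI] by simp
  thus ?thesis unfolding hom_exact_at_def K' I' K_def[symmetric] I_def[symmetric] by simp
qed

lemma exact_Sm_all: assumes u: "u \<in> hom C W X" and v: "v \<in> hom C X Y"
  shows "(\<forall>B. hom_exact_at C B W X Y u v) \<longleftrightarrow> (\<forall>B. hom_exact_at C B (So W) (So X) (So Y) (Sm W X u) (Sm X Y v))"
proof
  assume L: "\<forall>B. hom_exact_at C B W X Y u v"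
  show "\<forall>B. hom_exact_at C B (So W) (So X) (So Y) (Sm W X u) (Sm X Y v)"
  proof
    fix B
    have "hom_exact_at C (So (inv So B)) (So W) (So X) (So Y) (Sm W X u) (Sm X Y v)"
      using L exact_Sm[OF u v] by blast
    thus "hom_exact_at C B (So W) (So X) (So Y) (Sm W X u) (Sm X Y v)" by (simp add: So_inv1)
  qed
next
  assume R: "\<forall>B. hom_exact_at C B (So W) (So X) (So Y) (Sm W X u) (Sm X Y v)"
  show "\<forall>B. hom_exact_at C B W X Y u v" using R exact_Sm[OF u v] by blast
qed

lemma exact_ngt_v: assumes u: "u \<in> hom C W X" and v: "v \<in> hom C X Y"
  shows "hom_exact_at C B W X Y u (ngt C X Y v) \<longleftrightarrow> hom_exact_at C B W X Y u v"
proof -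
  have "{h \<in> hom C B X. cmp C B X Y (ngt C X Y v) h = zro C B Y} = {h \<in> hom C B X. cmp C B X Y v h = zro C B Y}"
    using v by (auto simp: cmp_ngt_l ngt_zro_iff cmp_hom)
  thus ?thesis unfolding hom_exact_at_def by simp
qed

lemma exact_ngt_u: assumes u: "u \<in> hom C W X" and v: "v \<in> hom C X Y"
  shows "hom_exact_at C B W X Y (ngt C W X u) v \<longleftrightarrow> hom_exact_at C B W X Y u v"
proof -
  have "cmp C B W X (ngt C W X u) ` hom C B W = cmp C B W X u ` hom C B W"
  proof (intro equalityI subsetI)
    fix x assume "x \<in> cmp C B W X (ngt C W X u) ` hom C B W"
    then obtain g where g: "g \<in> hom C B W" "x = cmp C B W X (ngt C W X u) g" by blast
    hence "x = cmp C B W X u (ngt C B W g)" using u by (simp add: cmp_ngt_l cmp_ngt_r)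
    thus "x \<in> cmp C B W X u ` hom C B W" using g ngt_hom by blast
  next
    fix x assume "x \<in> cmp C B W X u ` hom C B W"
    then obtain g where g: "g \<in> hom C B W" "x = cmp C B W X u g" by blast
    hence "x = cmp C B W X (ngt C W X u) (ngt C B W g)" using u by (simp add: cmp_ngt_l cmp_ngt_r ngt_hom ngt_ngt cmp_hom)
    thus "x \<in> cmp C B W X (ngt C W X u) ` hom C B W" using g ngt_hom by blast
  qed
  thus ?thesis unfolding hom_exact_at_def by simp
qed

abbreviation "obj X q \<equiv> seq_pos_obj So n X q"
abbreviation "mor X q \<equiv> seq_pos_mor C So Sm n X q"

lemma qdecomp: "q = (q div int n) * int n + q mod int n" "0 \<le> q mod int n" "q mod int n < int n"
  using n_pos by simp_all

lemma tgt_obj: assumes X: "is_sigseq C So n X"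
  shows "shift_obj So (q div int n) (seq_tgt So (fst X) (nat (q mod int n))) = obj X (q+1)"
proof -
  define i where "i = q div int n"
  define j where "j = q mod int n"
  have q: "q = i * int n + j" "0 \<le> j" "j < int n" using qdecomp unfolding i_def j_def by auto
  have len: "length (fst X) = n" using X unfolding is_sigseq_def by blast
  show ?thesis
  proof (cases "j + 1 < int n")
    case True
    have e: "q + 1 = i * int n + (j+1)" using q by simp
    have d: "(q+1) div int n = i" "(q+1) mod int n = j + 1" unfolding e
      by (rule divmod_help; use q True in auto)+
    have "nat (j+1) = Suc (nat j)" using q by simp
    moreover have "Suc (nat j) < length (fst X)" using True len q by linarith
    ultimately show ?thesis using d unfolding seq_pos_obj_def seq_tgt_def i_def[symmetric] j_def[symmetric] by simp
  next
    case False
    hence jn: "j = int n - 1" using q by simp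
    have "q + 1 = (i+1) * int n + 0" using q jn by (simp add: algebra_simps)
    hence d: "(q+1) div int n = i + 1" "(q+1) mod int n = 0" using divmod_help[of 0 "int n" "i+1"] n_pos by auto
    have "\<not> Suc (nat j) < length (fst X)" using jn len by simp
    hence t: "seq_tgt So (fst X) (nat j) = So (fst X ! 0)" unfolding seq_tgt_def by simp
    show ?thesis unfolding seq_pos_obj_def i_def[symmetric] j_def[symmetric] d t shift_obj_So shift_obj_succ
      by simp
  qed
qed

lemma alpha_hom: assumes X: "is_sigseq C So n X" and j: "j < n"
  shows "snd X ! j \<in> hom C (fst X ! j) (seq_tgt So (fst X) j)"
  using X j unfolding is_sigseq_def by blast

lemma nat_mod_lt: "nat (q mod int n) < n" using n_pos by (simp add: nat_less_iff)

lemma mor_hom: assumes X: "is_sigseq C So n X" shows "mor X q \<in> hom C (obj X q) (obj X (q+1))"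
  using shift_mor_hom[OF alpha_hom[OF X nat_mod_lt], of "q div int n" q] tgt_obj[OF X, of q]
  unfolding seq_pos_mor_def seq_pos_obj_def by simp

lemma qn_divmod: "(q + int n) div int n = q div int n + 1" "(q + int n) mod int n = q mod int n"
  using n_pos by (simp_all add: div_add_self2)

lemma obj_shift: "obj X (q + int n) = So (obj X q)"
  unfolding seq_pos_obj_def qn_divmod shift_obj_succ ..

lemma mor_shift: assumes X: "is_sigseq C So n X"
  shows "mor X (q + int n) = Sm (obj X q) (obj X (q+1)) (mor X q)"
  using shift_mor_succ[OF alpha_hom[OF X nat_mod_lt], of "q div int n" q] tgt_obj[OF X, of q]
  unfolding seq_pos_mor_def seq_pos_obj_def qn_divmod by simp

definition E where "E X p \<longleftrightarrow> (\<forall>B. hom_exact_at C B (obj X (p-1)) (obj X p) (obj X (p+1)) (mor X (p-1)) (mor X p))"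

lemma E_shift: assumes X: "is_sigseq C So n X" shows "E X (p + int n) \<longleftrightarrow> E X p"
proof -
  have a: "p + int n - 1 = (p - 1) + int n" "p + int n + 1 = (p+1) + int n" by simp_all
  have u: "mor X (p-1) \<in> hom C (obj X (p-1)) (obj X p)" using mor_hom[OF X, of "p-1"] by simp
  have v: "mor X p \<in> hom C (obj X p) (obj X (p+1))" using mor_hom[OF X, of p] by simp
  show ?thesis unfolding E_def a obj_shift mor_shift[OF X] using exact_Sm_all[OF u v] by simp
qed

lemma E_shift_int: assumes X: "is_sigseq C So n X" shows "E X (p + m * int n) \<longleftrightarrow> E X p"
proof (induction m rule: int_induct[where k=0])
  case base thus ?case by simp
next
  case (step1 i)
  have "E X (p + (i+1)*int n) = E X (p + i*int n)"
    using E_shift[OF X, of "p + i * int n"] by (simp add: algebra_simps)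
  thus ?case using step1 by simp
next
  case (step2 i)
  have "E X (p + i*int n) = E X (p + (i - 1)*int n)"
    using E_shift[OF X, of "p + (i - 1) * int n"] by (simp add: algebra_simps)
  thus ?case using step2 by simp
qed

lemma E_all: assumes X: "is_sigseq C So n X" and base: "\<And>p. 1 \<le> p \<Longrightarrow> p \<le> int n \<Longrightarrow> E X p"
  shows "E X p"
proof -
  define r where "r = (p - 1) mod int n + 1"
  define m where "m = (p - 1) div int n"
  have pe: "p = r + m * int n" unfolding r_def m_def using div_mult_mod_eq[of "p-1" "int n"] by linarith
  have b1: "(p-1) mod int n < int n" "0 \<le> (p-1) mod int n" using n_pos by simp_all
  have "1 \<le> r" "r \<le> int n" unfolding r_def using b1 by linarith+
  hence "E X r" using base by blast
  moreover have "E X (r + m * int n) = E X r" by (rule E_shift_int[OF X])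
  ultimately show ?thesis using pe by simp
qed

lemma exact_from_E: assumes X: "is_sigseq C So n X" and base: "\<And>p. 1 \<le> p \<Longrightarrow> p \<le> int n \<Longrightarrow> E X p"
  shows "is_exact_sigseq C So Sm n X"
  using E_all[OF X base] X unfolding is_exact_sigseq_def E_def by blast

end


context ac begin

definition sg :: "'o list \<Rightarrow> nat \<Rightarrow> 'm \<Rightarrow> 'm" where
  "sg As j f = (if even n then f else ngt C (So (As ! j)) (So (seq_tgt So As j)) f)"

definition rotk :: "nat \<Rightarrow> ('o,'m) sigseq \<Rightarrow> ('o,'m) sigseq" where
  "rotk k X = (drop k (fst X) @ map So (take k (fst X)),
     drop k (snd X) @ map (\<lambda>j. sg (fst X) j (Sm (fst X ! j) (seq_tgt So (fst X) j) (snd X ! j))) [0..<k])"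

abbreviation "R \<equiv> left_rotation C So Sm n"

lemma rotk_0: "rotk 0 X = X" by (simp add: rotk_def)

lemma rot_rotk: assumes l1: "length (fst X) = n" and l2: "length (snd X) = n" and k: "k < n"
  shows "R (rotk k X) = rotk (Suc k) X"
proof -
  obtain As al where X: "X = (As, al)" by fastforce
  have l: "length As = n" "length al = n" using l1 l2 X by auto
  have a0: "(drop k As @ map So (take k As)) ! 0 = As ! k" using l k by (simp add: nth_append)
  have a1: "(drop k As @ map So (take k As)) ! 1 = seq_tgt So As k"
  proof (cases "Suc k < n")
    case True
    hence "Suc 0 < n - k" by simp
    thus ?thesis using True l k by (simp add: nth_append seq_tgt_def)
  next
    case False
    hence "k = n - 1" using k by simp
    moreover have "0 < k" using n3 \<open>k = n - 1\<close> by simp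
    ultimately show ?thesis using l k n3 by (simp add: nth_append seq_tgt_def)
  qed
  have b0: "(drop k al @ map (\<lambda>j. sg As j (Sm (As ! j) (seq_tgt So As j) (al ! j))) [0..<k]) ! 0 = al ! k"
    using l k by (simp add: nth_append)
  have t1: "tl (drop k As @ map So (take k As)) = drop (Suc k) As @ map So (take k As)"
    using l k by (simp add: drop_Suc tl_drop)
  have t2: "tl (drop k al @ map (\<lambda>j. sg As j (Sm (As ! j) (seq_tgt So As j) (al ! j))) [0..<k])
      = drop (Suc k) al @ map (\<lambda>j. sg As j (Sm (As ! j) (seq_tgt So As j) (al ! j))) [0..<k]"
    using l k by (simp add: drop_Suc tl_drop)
  have tk: "take (Suc k) As = take k As @ [As ! k]" using l k by (simp add: take_Suc_conv_app_nth)
  show ?thesis unfolding X rotk_def left_rotation_def Let_def fst_conv snd_conv a0 a1 b0 t1 t2 tk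
    by (simp add: sg_def)
qed

lemma rotk_len: "length (fst X) = n \<Longrightarrow> length (snd X) = n \<Longrightarrow> k \<le> n \<Longrightarrow>
   length (fst (rotk k X)) = n \<and> length (snd (rotk k X)) = n"
  by (simp add: rotk_def)

lemma pow_rotk: assumes l1: "length (fst X) = n" and l2: "length (snd X) = n"
  shows "k \<le> n \<Longrightarrow> (R ^^ k) X = rotk k X"
proof (induction k)
  case 0 thus ?case by (simp add: rotk_0)
next
  case (Suc k) thus ?case using rot_rotk[OF l1 l2, of k] by simp
qed

lemma rotk_fst: assumes l1: "length (fst X) = n" and k: "k \<le> n" and i: "i < n"
  shows "fst (rotk k X) ! i = (if i < n - k then fst X ! (k + i) else So (fst X ! (i - (n - k))))"
  using l1 k i by (simp add: rotk_def nth_append)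

lemma rotk_snd: assumes l1: "length (fst X) = n" and l2: "length (snd X) = n" and k: "k \<le> n" and i: "i < n"
  shows "snd (rotk k X) ! i = (if i < n - k then snd X ! (k + i) else
     sg (fst X) (i - (n - k)) (Sm (fst X ! (i - (n - k))) (seq_tgt So (fst X) (i - (n - k))) (snd X ! (i - (n - k)))))"
proof (cases "i < n - k")
  case True thus ?thesis using l1 l2 k i by (simp add: rotk_def nth_append)
next
  case False
  hence "i + k - n < k" using i by simp
  thus ?thesis using False l1 l2 k i by (simp add: rotk_def nth_append)
qed

lemma sg_hom: "f \<in> hom C (So (As ! j)) (So (seq_tgt So As j)) \<Longrightarrow> sg As j f \<in> hom C (So (As ! j)) (So (seq_tgt So As j))"
  by (simp add: sg_def ngt_hom)

lemma exact_sg_v: assumes u: "u \<in> hom C W X" and v: "v \<in> hom C (So (As ! j)) (So (seq_tgt So As j))"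
  and X: "X = So (As ! j)" and Y: "Y = So (seq_tgt So As j)"
  shows "hom_exact_at C B W X Y u (sg As j v) \<longleftrightarrow> hom_exact_at C B W X Y u v"
  using exact_ngt_v[OF u v[folded X Y]] unfolding sg_def X Y by simp

lemma exact_sg_u: assumes u: "u \<in> hom C (So (As ! j)) (So (seq_tgt So As j))" and v: "v \<in> hom C X Y"
  and W: "W = So (As ! j)" and X: "X = So (seq_tgt So As j)"
  shows "hom_exact_at C B W X Y (sg As j u) v \<longleftrightarrow> hom_exact_at C B W X Y u v"
  using exact_ngt_u[OF u[folded W X] v] unfolding sg_def W X by simp

end



locale acN = ac C So Sm n for C :: "('o,'m) addcat" and So Sm n +
  fixes N :: "('o,'m) sigseq set"
  assumes sigN: "\<forall>S\<in>N. is_sigseq C So n S" and N1: "N1_star C So Sm n N"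
    and N3a: "N3 C So Sm n N" and N2s: "N2_star C So Sm n N"
begin

lemma N1a: "is_exact_sigseq C So Sm n S \<Longrightarrow> is_exact_sigseq C So Sm n T \<Longrightarrow> is_weak_iso C So Sm n S T ps \<Longrightarrow> S \<in> N \<Longrightarrow> T \<in> N"
  using N1 unfolding N1_star_def by blast
lemma N1b: "is_zero_object C Z \<Longrightarrow> trivial_sigseq C So n Z A \<in> N"
  using N1 unfolding N1_star_def by blast
lemma N1c: "a \<in> hom C A1 A2 \<Longrightarrow> \<exists>S \<in> N. fst S ! 0 = A1 \<and> fst S ! 1 = A2 \<and> snd S ! 0 = a"
  using N1 unfolding N1_star_def by blast
lemma N3': "S \<in> N \<Longrightarrow> T \<in> N \<Longrightarrow> p1 \<in> hom C (fst S ! 0) (fst T ! 0) \<Longrightarrow> p2 \<in> hom C (fst S ! 1) (fst T ! 1) \<Longrightarrow>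
        cmp C (fst S ! 0) (fst S ! 1) (fst T ! 1) p2 (snd S ! 0) =
        cmp C (fst S ! 0) (fst T ! 0) (fst T ! 1) (snd T ! 0) p1 \<Longrightarrow>
        \<exists>ps. is_sigseq_mor C So Sm n S T ps \<and> ps ! 0 = p1 \<and> ps ! 1 = p2"
  using N3a unfolding N3_def by blast
lemma rotN: "S \<in> N \<Longrightarrow> R S \<in> N" using N2s unfolding N2_star_def by blast

lemma sigN': "S \<in> N \<Longrightarrow> is_sigseq C So n S" using sigN by blast
lemma lenN: "S \<in> N \<Longrightarrow> length (fst S) = n \<and> length (snd S) = n" using sigN unfolding is_sigseq_def by blast

lemma R_rotk1: "length (fst X) = n \<Longrightarrow> length (snd X) = n \<Longrightarrow> R X = rotk 1 X"
  using rot_rotk[of X 0] rotk_0 n3 by simp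

lemma mor_hom_j: "is_sigseq_mor C So Sm n S T ps \<Longrightarrow> j < n \<Longrightarrow> ps ! j \<in> hom C (fst S ! j) (fst T ! j)"
  unfolding is_sigseq_mor_def by blast
lemma mor_sq: "is_sigseq_mor C So Sm n S T ps \<Longrightarrow> Suc j < n \<Longrightarrow>
   cmp C (fst S ! j) (fst S ! Suc j) (fst T ! Suc j) (ps ! Suc j) (snd S ! j) =
   cmp C (fst S ! j) (fst T ! j) (fst T ! Suc j) (snd T ! j) (ps ! j)"
  unfolding is_sigseq_mor_def by blast
lemma mor_last: "is_sigseq_mor C So Sm n S T ps \<Longrightarrow>
   cmp C (fst S ! (n - 1)) (So (fst S ! 0)) (So (fst T ! 0)) (Sm (fst S ! 0) (fst T ! 0) (ps ! 0)) (snd S ! (n - 1)) =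
   cmp C (fst S ! (n - 1)) (fst T ! (n - 1)) (So (fst T ! 0)) (snd T ! (n - 1)) (ps ! (n - 1))"
  unfolding is_sigseq_mor_def by blast

lemma triv_facts:
  "fst (trivial_sigseq C So n Z A) ! 0 = A" "fst (trivial_sigseq C So n Z A) ! 1 = A"
  "fst (trivial_sigseq C So n Z A) ! 2 = Z"
  "snd (trivial_sigseq C So n Z A) ! 0 = idm C A" "snd (trivial_sigseq C So n Z A) ! 1 = zro C A Z"
  "length (fst (trivial_sigseq C So n Z A)) = n" "length (snd (trivial_sigseq C So n Z A)) = n"
  using n3 by (simp_all add: trivial_sigseq_def nth_append)

lemma K: assumes Y: "Y \<in> N"
  shows "hom_exact_at C B (fst Y ! 0) (fst Y ! 1) (fst Y ! 2) (snd Y ! 0) (snd Y ! 1)"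
proof -
  have sY: "is_sigseq C So n Y" using sigN' Y .
  have lY: "length (fst Y) = n" "length (snd Y) = n" using lenN Y by auto
  define Y0 Y1 Y2 y0 y1 where "Y0 = fst Y ! 0" "Y1 = fst Y ! 1" "Y2 = fst Y ! 2" "y0 = snd Y ! 0" "y1 = snd Y ! 1"
  have y0: "y0 \<in> hom C Y0 Y1" using alpha_hom[OF sY, of 0] n3 unfolding Y0_Y1_Y2_y0_y1_def seq_tgt_def lY by simp
  have y1: "y1 \<in> hom C Y1 Y2" using alpha_hom[OF sY, of 1] n3 unfolding Y0_Y1_Y2_y0_y1_def seq_tgt_def lY by (simp add: numeral_2_eq_2)
  obtain Z where Z: "is_zero_object C Z" using zero_ex by blast
  have comp0: "cmp C Y0 Y1 Y2 y1 y0 = zro C Y0 Y2"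
  proof -
    define T where "T = trivial_sigseq C So n Z Y0"
    have T: "T \<in> N" unfolding T_def using N1b[OF Z] .
    obtain ps where ps: "is_sigseq_mor C So Sm n T Y ps" "ps ! 0 = idm C Y0" "ps ! 1 = y0"
      using N3'[OF T Y, of "idm C Y0" y0] triv_facts idm_hom y0 unfolding T_def Y0_Y1_Y2_y0_y1_def by auto
    have "cmp C Y0 Z Y2 (ps ! 2) (zro C Y0 Z) = cmp C Y0 Y1 Y2 y1 y0"
      using mor_sq[OF ps(1), of 1] n3 ps(3) triv_facts unfolding T_def Y0_Y1_Y2_y0_y1_def by (simp add: numeral_2_eq_2)
    moreover have "ps ! 2 \<in> hom C Z Y2" using mor_hom_j[OF ps(1), of 2] n3 triv_facts unfolding T_def Y0_Y1_Y2_y0_y1_def by simp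
    ultimately show ?thesis using cmp_zro_r by metis
  qed
  show ?thesis unfolding hom_exact_at_def Y0_Y1_Y2_y0_y1_def[symmetric]
  proof (intro equalityI subsetI)
    fix x assume "x \<in> cmp C B Y0 Y1 y0 ` hom C B Y0"
    then obtain g where g: "g \<in> hom C B Y0" "x = cmp C B Y0 Y1 y0 g" by blast
    have "cmp C B Y1 Y2 y1 x = cmp C B Y0 Y2 (cmp C Y0 Y1 Y2 y1 y0) g" using g y0 y1 by (simp add: assoc)
    also have "\<dots> = zro C B Y2" using comp0 g by (simp add: cmp_zro_l)
    finally show "x \<in> {h \<in> hom C B Y1. cmp C B Y1 Y2 y1 h = zro C B Y2}" using g y0 cmp_hom by blast
  next
    fix h assume "h \<in> {h \<in> hom C B Y1. cmp C B Y1 Y2 y1 h = zro C B Y2}"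
    hence h: "h \<in> hom C B Y1" "cmp C B Y1 Y2 y1 h = zro C B Y2" by auto
    define T where "T = trivial_sigseq C So n Z B"
    have lT: "length (fst T) = n" "length (snd T) = n" using triv_facts unfolding T_def by auto
    have RT: "R T \<in> N" unfolding T_def using rotN[OF N1b[OF Z]] .
    have RY: "R Y \<in> N" using rotN[OF Y] .
    have RTe: "R T = rotk 1 T" using R_rotk1 lT by blast
    have RYe: "R Y = rotk 1 Y" using R_rotk1 lY by blast
    have nm: "n - 1 < n" "0 < n - 1" "1 < n - 1" "\<not> n - 1 < n - 1" "n - 1 - (n - 1) = 0" using n3 by auto
    have tf: "fst T ! 0 = B" "fst T ! 1 = B" "fst T ! 2 = Z" "snd T ! 0 = idm C B" "snd T ! 1 = zro C B Z"
      using triv_facts unfolding T_def by auto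
    have fT0: "fst (R T) ! 0 = B" using rotk_fst[OF lT(1), of 1 0] nm n3 tf unfolding RTe by simp
    have fT1: "fst (R T) ! 1 = Z" using rotk_fst[OF lT(1), of 1 1] nm n3 tf unfolding RTe by (simp add: numeral_2_eq_2)
    have fTl: "fst (R T) ! (n-1) = So B" using rotk_fst[OF lT(1), of 1 "n-1"] nm n3 tf unfolding RTe by simp
    have sT0: "snd (R T) ! 0 = zro C B Z"
      using rotk_snd[OF lT, of 1 0] nm n3 tf unfolding RTe by simp
    have tT0: "seq_tgt So (fst T) 0 = B" using n3 lT tf unfolding seq_tgt_def by auto
    have sTl: "snd (R T) ! (n-1) = sg (fst T) 0 (idm C (So B))"
      using rotk_snd[OF lT, of 1 "n-1"] nm n3 tf tT0 unfolding RTe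
      by (simp add: Sm_id)
    have fY0: "fst (R Y) ! 0 = Y1" and fY1: "fst (R Y) ! 1 = Y2" and fYl: "fst (R Y) ! (n-1) = So Y0"
      using rotk_fst[OF lY(1), of 1] nm n3 unfolding RYe Y0_Y1_Y2_y0_y1_def by (auto simp: numeral_2_eq_2)
    have sY0: "snd (R Y) ! 0 = y1"
      using rotk_snd[OF lY, of 1 0] nm n3 unfolding RYe Y0_Y1_Y2_y0_y1_def by auto
    have tY0: "seq_tgt So (fst Y) 0 = Y1" using n3 lY unfolding seq_tgt_def Y0_Y1_Y2_y0_y1_def by simp
    have sYl: "snd (R Y) ! (n-1) = sg (fst Y) 0 (Sm Y0 Y1 y0)"
      using rotk_snd[OF lY, of 1 "n-1"] nm n3 tY0 unfolding RYe Y0_Y1_Y2_y0_y1_def by simp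
    have "\<exists>ps. is_sigseq_mor C So Sm n (R T) (R Y) ps \<and> ps ! 0 = h \<and> ps ! 1 = zro C Z Y2"
      using N3'[OF RT RY, of h "zro C Z Y2"] fT0 fT1 fY0 fY1 sT0 sY0 h zro_hom y1
      by (simp add: cmp_zro_l cmp_zro_r)
    then obtain ps where ps: "is_sigseq_mor C So Sm n (R T) (R Y) ps" "ps ! 0 = h" "ps ! 1 = zro C Z Y2"
      by blast
    have pl: "ps ! (n-1) \<in> hom C (So B) (So Y0)" using mor_hom_j[OF ps(1), of "n-1"] nm fTl fYl by simp
    have eq: "cmp C (So B) (So B) (So Y1) (Sm B Y1 h) (sg (fst T) 0 (idm C (So B))) =
              cmp C (So B) (So Y0) (So Y1) (sg (fst Y) 0 (Sm Y0 Y1 y0)) (ps ! (n-1))"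
      using mor_last[OF ps(1)] fT0 fTl fY0 fYl sTl sYl ps(2) by simp
    have eq2: "Sm B Y1 h = cmp C (So B) (So Y0) (So Y1) (Sm Y0 Y1 y0) (ps ! (n-1))"
    proof (cases "even n")
      case True thus ?thesis using eq Sm_hom[OF h(1)] by (simp add: sg_def id_r)
    next
      case False
      hence "ngt C (So B) (So Y1) (Sm B Y1 h) = ngt C (So B) (So Y1) (cmp C (So B) (So Y0) (So Y1) (Sm Y0 Y1 y0) (ps ! (n-1)))"
        using eq Sm_hom[OF h(1)] Sm_hom[OF y0] pl tT0 tf tY0 unfolding sg_def Y0_Y1_Y2_y0_y1_def[symmetric]
        by (simp add: cmp_ngt_r cmp_ngt_l idm_hom id_r)
      thus ?thesis using ngt_inj Sm_hom[OF h(1)] Sm_hom[OF y0] pl cmp_hom by blast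
    qed
    define g where "g = SmI B Y0 (ps ! (n-1))"
    have g: "g \<in> hom C B Y0" "Sm B Y0 g = ps ! (n-1)" using pl SmI_hom Sm_SmI unfolding g_def by auto
    have "Sm B Y1 h = Sm B Y1 (cmp C B Y0 Y1 y0 g)" using eq2 g y0 by (simp add: Sm_cmp)
    hence "h = cmp C B Y0 Y1 y0 g" using Sm_inj h(1) g(1) y0 cmp_hom by blast
    thus "h \<in> cmp C B Y0 Y1 y0 ` hom C B Y0" using g by blast
  qed
qed

end



context ac begin

lemma obj_small: "m < n \<Longrightarrow> obj X (int m) = fst X ! m"
  by (simp add: seq_pos_obj_def shift_obj_0)
lemma mor_small: "m < n \<Longrightarrow> mor X (int m) = snd X ! m"
  by (simp add: seq_pos_mor_def shift_mor_0)
lemma obj_succ_small: "is_sigseq C So n X \<Longrightarrow> m < n \<Longrightarrow> obj X (int m + 1) = seq_tgt So (fst X) m"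
  using tgt_obj[of X "int m"] by (simp add: shift_obj_0)

lemma base_E_small: assumes X: "is_sigseq C So n X" and j: "1 \<le> j" "j < n"
  and H: "\<forall>B. hom_exact_at C B (fst X ! (j-1)) (fst X ! j) (seq_tgt So (fst X) j) (snd X ! (j-1)) (snd X ! j)"
  shows "E X (int j)"
proof -
  have e: "int j - 1 = int (j - 1)" using j by simp
  have jj: "j - 1 < n" using j by simp
  have o1: "obj X (int j - 1) = fst X ! (j-1)" unfolding e by (rule obj_small[OF jj])
  have m1: "mor X (int j - 1) = snd X ! (j-1)" unfolding e by (rule mor_small[OF jj])
  show ?thesis unfolding E_def o1 m1 obj_small[OF j(2)] mor_small[OF j(2)] obj_succ_small[OF X j(2)] using H .
qed

lemma base_E_n: assumes X: "is_sigseq C So n X"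
  and H: "\<forall>B. hom_exact_at C B (fst X ! (n-1)) (So (fst X ! 0)) (So (fst X ! 1)) (snd X ! (n-1)) (Sm (fst X ! 0) (fst X ! 1) (snd X ! 0))"
  shows "E X (int n)"
proof -
  have e: "int n - 1 = int (n - 1)" "int n = 0 + int n" "int n + 1 = 1 + int n" using n3 by simp_all
  have o0: "obj X 0 = fst X ! 0" "obj X 1 = fst X ! 1" using obj_small[of 0 X] obj_small[of 1 X] n3 by simp_all
  have m0: "mor X 0 = snd X ! 0" using mor_small[of 0 X] n3 by simp
  have nn: "n - 1 < n" using n3 by simp
  have a: "obj X (int n - 1) = fst X ! (n-1)" "mor X (int n - 1) = snd X ! (n-1)"
    unfolding e(1) by (rule obj_small[OF nn], rule mor_small[OF nn])
  have b: "obj X (int n) = So (fst X ! 0)" using obj_shift[of X 0] o0 by simp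
  have c: "obj X (int n + 1) = So (fst X ! 1)" using obj_shift[of X 1] o0 by (simp add: add.commute)
  have d: "mor X (int n) = Sm (fst X ! 0) (fst X ! 1) (snd X ! 0)" using mor_shift[OF X, of 0] o0 m0 by simp
  show ?thesis unfolding E_def a b c d using H .
qed

end

context acN begin

lemma exact_from_rots: assumes X: "is_sigseq C So n X" and rN: "\<And>k. 1 \<le> k \<Longrightarrow> k \<le> n \<Longrightarrow> rotk k X \<in> N"
  shows "is_exact_sigseq C So Sm n X"
proof (rule exact_from_E[OF X])
  have l: "length (fst X) = n" "length (snd X) = n" using X unfolding is_sigseq_def by auto
  have t0: "seq_tgt So (fst X) 0 = fst X ! 1" and t1: "seq_tgt So (fst X) 1 = fst X ! 2"
    using l n3 unfolding seq_tgt_def by (auto simp: numeral_2_eq_2)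
  have a0: "snd X ! 0 \<in> hom C (fst X ! 0) (fst X ! 1)" using alpha_hom[OF X, of 0] t0 n3 by simp
  have a1: "snd X ! 1 \<in> hom C (fst X ! 1) (fst X ! 2)" using alpha_hom[OF X, of 1] t1 n3 by simp
  fix p :: int assume p: "1 \<le> p" "p \<le> int n"
  define j where "j = nat p"
  have pj: "p = int j" "1 \<le> j" "j \<le> n" using p unfolding j_def by auto
  show "E X p"
  proof (cases "j = n")
    case True
    define Y where "Y = rotk (n-1) X"
    have Y: "Y \<in> N" unfolding Y_def using rN n3 by simp
    have nm: "n - 1 \<le> n" "0 < n" "1 < n" "2 < n" using n3 by auto
    have f: "fst Y ! 0 = fst X ! (n-1)" "fst Y ! 1 = So (fst X ! 0)" "fst Y ! 2 = So (fst X ! 1)"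
      using rotk_fst[OF l(1) nm(1)] nm n3 unfolding Y_def by auto
    have s: "snd Y ! 0 = snd X ! (n-1)" "snd Y ! 1 = sg (fst X) 0 (Sm (fst X ! 0) (fst X ! 1) (snd X ! 0))"
      using rotk_snd[OF l nm(1)] nm n3 t0 unfolding Y_def by auto
    have u: "snd X ! (n-1) \<in> hom C (fst X ! (n-1)) (So (fst X ! 0))"
      using alpha_hom[OF X, of "n-1"] l n3 unfolding seq_tgt_def by simp
    have v: "Sm (fst X ! 0) (fst X ! 1) (snd X ! 0) \<in> hom C (So (fst X ! 0)) (So (seq_tgt So (fst X) 0))"
      using Sm_hom[OF a0] t0 by simp
    have "\<forall>B. hom_exact_at C B (fst X ! (n-1)) (So (fst X ! 0)) (So (fst X ! 1)) (snd X ! (n-1)) (Sm (fst X ! 0) (fst X ! 1) (snd X ! 0))"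
    proof
      fix B
      have "hom_exact_at C B (fst X ! (n-1)) (So (fst X ! 0)) (So (fst X ! 1)) (snd X ! (n-1)) (sg (fst X) 0 (Sm (fst X ! 0) (fst X ! 1) (snd X ! 0)))"
        using K[OF Y, of B] f s by simp
      thus "hom_exact_at C B (fst X ! (n-1)) (So (fst X ! 0)) (So (fst X ! 1)) (snd X ! (n-1)) (Sm (fst X ! 0) (fst X ! 1) (snd X ! 0))"
        using exact_ngt_v[OF u Sm_hom[OF a0]] t0 by (cases "even n") (simp_all add: sg_def)
    qed
    thus ?thesis using base_E_n[OF X] pj True by simp
  next
    case False
    hence jn: "j < n" using pj by simp
    show ?thesis
    proof (cases "j = 1")
      case True
      define Y where "Y = rotk n X"
      have Y: "Y \<in> N" unfolding Y_def using rN n3 by simp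
      have nm: "n \<le> n" "0 < n" "1 < n" "2 < n" using n3 by auto
      have f: "fst Y ! 0 = So (fst X ! 0)" "fst Y ! 1 = So (fst X ! 1)" "fst Y ! 2 = So (fst X ! 2)"
        using rotk_fst[OF l(1) nm(1)] nm unfolding Y_def by auto
      have s: "snd Y ! 0 = sg (fst X) 0 (Sm (fst X ! 0) (fst X ! 1) (snd X ! 0))"
              "snd Y ! 1 = sg (fst X) 1 (Sm (fst X ! 1) (fst X ! 2) (snd X ! 1))"
        using rotk_snd[OF l nm(1)] nm t0 t1 unfolding Y_def by auto
      have u: "Sm (fst X ! 0) (fst X ! 1) (snd X ! 0) \<in> hom C (So (fst X ! 0)) (So (seq_tgt So (fst X) 0))"
        using Sm_hom[OF a0] t0 by simp
      have v: "Sm (fst X ! 1) (fst X ! 2) (snd X ! 1) \<in> hom C (So (fst X ! 1)) (So (seq_tgt So (fst X) 1))"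
        using Sm_hom[OF a1] t1 by simp
      have v': "Sm (fst X ! 1) (fst X ! 2) (snd X ! 1) \<in> hom C (So (fst X ! 1)) (So (fst X ! 2))"
        using Sm_hom[OF a1] by simp
      have "\<forall>B. hom_exact_at C B (So (fst X ! 0)) (So (fst X ! 1)) (So (fst X ! 2))
              (Sm (fst X ! 0) (fst X ! 1) (snd X ! 0)) (Sm (fst X ! 1) (fst X ! 2) (snd X ! 1))"
      proof
        fix B
        have "hom_exact_at C B (So (fst X ! 0)) (So (fst X ! 1)) (So (fst X ! 2))
              (sg (fst X) 0 (Sm (fst X ! 0) (fst X ! 1) (snd X ! 0))) (sg (fst X) 1 (Sm (fst X ! 1) (fst X ! 2) (snd X ! 1)))"
          using K[OF Y, of B] f s by simp
        hence "hom_exact_at C B (So (fst X ! 0)) (So (fst X ! 1)) (So (fst X ! 2))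
              (Sm (fst X ! 0) (fst X ! 1) (snd X ! 0)) (sg (fst X) 1 (Sm (fst X ! 1) (fst X ! 2) (snd X ! 1)))"
          using exact_ngt_u[OF Sm_hom[OF a0] v'] exact_ngt_u[OF Sm_hom[OF a0] ngt_hom[OF v']] t0 t1
          by (cases "even n") (simp_all add: sg_def)
        thus "hom_exact_at C B (So (fst X ! 0)) (So (fst X ! 1)) (So (fst X ! 2))
              (Sm (fst X ! 0) (fst X ! 1) (snd X ! 0)) (Sm (fst X ! 1) (fst X ! 2) (snd X ! 1))"
          using exact_ngt_v[OF Sm_hom[OF a0] v'] t0 t1 by (cases "even n") (simp_all add: sg_def)
      qed
      hence "\<forall>B. hom_exact_at C B (fst X ! 0) (fst X ! 1) (fst X ! 2) (snd X ! 0) (snd X ! 1)"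
        using exact_Sm_all[OF a0 a1] by simp
      thus ?thesis using base_E_small[OF X, of 1] True pj n3 t1 by simp
    next
      case False
      hence j2: "2 \<le> j" using pj by simp
      define Y where "Y = rotk (j-1) X"
      have Y: "Y \<in> N" unfolding Y_def using rN j2 jn by simp
      have nm: "j - 1 \<le> n" "0 < n" "1 < n" "2 < n" using n3 jn by auto
      have f: "fst Y ! 0 = fst X ! (j-1)" "fst Y ! 1 = fst X ! j" "fst Y ! 2 = seq_tgt So (fst X) j"
        using rotk_fst[OF l(1) nm(1)] nm jn j2 l unfolding Y_def seq_tgt_def by auto
      have s: "snd Y ! 0 = snd X ! (j-1)" "snd Y ! 1 = snd X ! j"
        using rotk_snd[OF l nm(1)] nm jn j2 unfolding Y_def by auto
      have "\<forall>B. hom_exact_at C B (fst X ! (j-1)) (fst X ! j) (seq_tgt So (fst X) j) (snd X ! (j-1)) (snd X ! j)"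
        using K[OF Y] f s by simp
      thus ?thesis using base_E_small[OF X _ jn] j2 pj by simp
    qed
  qed
qed

end



context acN begin

lemma powN: "S \<in> N \<Longrightarrow> (R ^^ k) S \<in> N"
  by (induction k) (simp_all add: rotN)

lemma rotk_N: "X \<in> N \<Longrightarrow> k \<le> n \<Longrightarrow> rotk k X \<in> N"
  using powN pow_rotk lenN by metis

lemma exact_N: "X \<in> N \<Longrightarrow> is_exact_sigseq C So Sm n X"
  using exact_from_rots sigN' rotk_N by blast

lemma rotk_N_R: assumes l: "length (fst S) = n" "length (snd S) = n" and RS: "R S \<in> N" and k: "1 \<le> k" "k \<le> n"
  shows "rotk k S \<in> N"
proof -
  obtain m where m: "k = Suc m" using k by (cases k) auto
  have "rotk k S = (R ^^ k) S" using pow_rotk[OF l k(2)] by simp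
  also have "\<dots> = (R ^^ m) (R S)" unfolding m funpow_Suc_right by simp
  finally show ?thesis using powN[OF RS] by simp
qed

lemma unsign: assumes x: "x \<in> hom C P Q" and p: "p \<in> hom C Q R'" and y: "y \<in> hom C Q' R'" and p': "p' \<in> hom C P Q'"
  and e: "cmp C P Q R' p (if even n then x else ngt C P Q x) = cmp C P Q' R' (if even n then y else ngt C Q' R' y) p'"
  shows "cmp C P Q R' p x = cmp C P Q' R' y p'"
proof (cases "even n")
  case True thus ?thesis using e by simp
next
  case False
  hence "ngt C P R' (cmp C P Q R' p x) = ngt C P R' (cmp C P Q' R' y p')"
    using e x p y p' by (simp add: cmp_ngt_l cmp_ngt_r)
  thus ?thesis using ngt_inj x p y p' cmp_hom by blast
qed

lemma iso_id: "is_iso C A A (idm C A)"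
  unfolding is_iso_def using idm_hom id_l by blast

lemma SmI_id: "SmI A A (idm C (So A)) = idm C A"
proof -
  have "Sm A A (SmI A A (idm C (So A))) = Sm A A (idm C A)" using Sm_SmI[OF idm_hom] Sm_id by simp
  thus ?thesis using Sm_inj[OF SmI_hom[OF idm_hom] idm_hom] by blast
qed

lemma back_lem: assumes S: "is_sigseq C So n S" and RS: "R S \<in> N" shows "S \<in> N"
proof -
  have lS: "length (fst S) = n" "length (snd S) = n" using S unfolding is_sigseq_def by auto
  have exS: "is_exact_sigseq C So Sm n S" using exact_from_rots[OF S] rotk_N_R[OF lS RS] by blast
  define A1 A2 where "A1 = fst S ! 0" "A2 = fst S ! 1"
  have tS0: "seq_tgt So (fst S) 0 = A2" using lS n3 unfolding seq_tgt_def A1_A2_def by simp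
  have a0: "snd S ! 0 \<in> hom C A1 A2" using alpha_hom[OF S, of 0] tS0 n3 unfolding A1_A2_def by simp
  obtain T where T: "T \<in> N" "fst T ! 0 = A1" "fst T ! 1 = A2" "snd T ! 0 = snd S ! 0" using N1c[OF a0] by blast
  have sT: "is_sigseq C So n T" using sigN' T(1) .
  have lT: "length (fst T) = n" "length (snd T) = n" using lenN T(1) by auto
  have exT: "is_exact_sigseq C So Sm n T" using exact_N T(1) .
  have tT0: "seq_tgt So (fst T) 0 = A2" using lT n3 T unfolding seq_tgt_def by simp
  define TT SS where "TT = rotk n T" "SS = rotk n S"
  have TT: "TT \<in> N" unfolding TT_SS_def using rotk_N[OF T(1)] by simp
  have SS: "SS \<in> N" unfolding TT_SS_def using rotk_N_R[OF lS RS, of n] n3 by simp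
  have fTT: "\<And>i. i < n \<Longrightarrow> fst TT ! i = So (fst T ! i)" unfolding TT_SS_def using rotk_fst[OF lT(1)] by simp
  have fSS: "\<And>i. i < n \<Longrightarrow> fst SS ! i = So (fst S ! i)" unfolding TT_SS_def using rotk_fst[OF lS(1)] by simp
  have sTT: "\<And>i. i < n \<Longrightarrow> snd TT ! i = sg (fst T) i (Sm (fst T ! i) (seq_tgt So (fst T) i) (snd T ! i))"
    unfolding TT_SS_def using rotk_snd[OF lT] by simp
  have sSS: "\<And>i. i < n \<Longrightarrow> snd SS ! i = sg (fst S) i (Sm (fst S ! i) (seq_tgt So (fst S) i) (snd S ! i))"
    unfolding TT_SS_def using rotk_snd[OF lS] by simp
  have n01: "0 < n" "1 < n" using n3 by auto
  have e0: "snd TT ! 0 = snd SS ! 0"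
    using sTT[OF n01(1)] sSS[OF n01(1)] T tT0 tS0 unfolding sg_def A1_A2_def by simp
  have sig0: "snd SS ! 0 \<in> hom C (So A1) (So A2)"
    using sSS[OF n01(1)] Sm_hom[OF a0] tS0 unfolding sg_def A1_A2_def by (simp add: ngt_hom)
  have "\<exists>ps. is_sigseq_mor C So Sm n TT SS ps \<and> ps ! 0 = idm C (So A1) \<and> ps ! 1 = idm C (So A2)"
    apply (rule N3'[OF TT SS])
    using fTT fSS n01 T idm_hom e0 sig0 id_l id_r unfolding A1_A2_def by auto
  then obtain ps where ps: "is_sigseq_mor C So Sm n TT SS ps" "ps ! 0 = idm C (So A1)" "ps ! 1 = idm C (So A2)"
    by blast
  have psh: "\<And>j. j < n \<Longrightarrow> ps ! j \<in> hom C (So (fst T ! j)) (So (fst S ! j))"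
    using mor_hom_j[OF ps(1)] fTT fSS by simp
  define phi where "phi j = SmI (fst T ! j) (fst S ! j) (ps ! j)" for j
  define phs where "phs = map phi [0..<n]"
  have phs_nth: "\<And>j. j < n \<Longrightarrow> phs ! j = phi j" unfolding phs_def by simp
  have phh: "\<And>j. j < n \<Longrightarrow> phi j \<in> hom C (fst T ! j) (fst S ! j)" unfolding phi_def using psh SmI_hom by blast
  have Smphi: "\<And>j. j < n \<Longrightarrow> Sm (fst T ! j) (fst S ! j) (phi j) = ps ! j" unfolding phi_def using psh Sm_SmI by blast
  have phi0: "phi 0 = idm C A1" unfolding phi_def using ps(2) T SmI_id unfolding A1_A2_def by simp
  have phi1: "phi 1 = idm C A2" unfolding phi_def using ps(3) T SmI_id unfolding A1_A2_def by simp
  have mor: "is_sigseq_mor C So Sm n T S phs"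
    unfolding is_sigseq_mor_def
  proof (intro conjI allI impI)
    show "length phs = n" unfolding phs_def by simp
  next
    fix j assume j: "j < n" thus "phs ! j \<in> hom C (fst T ! j) (fst S ! j)" using phs_nth phh by simp
  next
    fix j assume j: "Suc j < n"
    have jl: "j < n" using j by simp
    have tT: "seq_tgt So (fst T) j = fst T ! Suc j" using j lT unfolding seq_tgt_def by simp
    have tS: "seq_tgt So (fst S) j = fst S ! Suc j" using j lS unfolding seq_tgt_def by simp
    have b: "snd T ! j \<in> hom C (fst T ! j) (fst T ! Suc j)" using alpha_hom[OF sT, of j] j tT by simp
    have a: "snd S ! j \<in> hom C (fst S ! j) (fst S ! Suc j)" using alpha_hom[OF S, of j] j tS by simp
    have sq: "cmp C (So (fst T ! j)) (So (fst T ! Suc j)) (So (fst S ! Suc j)) (ps ! Suc j) (sg (fst T) j (Sm (fst T ! j) (fst T ! Suc j) (snd T ! j))) =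
              cmp C (So (fst T ! j)) (So (fst S ! j)) (So (fst S ! Suc j)) (sg (fst S) j (Sm (fst S ! j) (fst S ! Suc j) (snd S ! j))) (ps ! j)"
      using mor_sq[OF ps(1) j] fTT fSS sTT sSS j tT tS by simp
    have sq2: "cmp C (So (fst T ! j)) (So (fst T ! Suc j)) (So (fst S ! Suc j)) (ps ! Suc j) (Sm (fst T ! j) (fst T ! Suc j) (snd T ! j)) =
              cmp C (So (fst T ! j)) (So (fst S ! j)) (So (fst S ! Suc j)) (Sm (fst S ! j) (fst S ! Suc j) (snd S ! j)) (ps ! j)"
      by (rule unsign[OF Sm_hom[OF b] psh[OF j] Sm_hom[OF a] psh[OF jl]]) (rule sq[unfolded sg_def tT tS])
    have "Sm (fst T ! j) (fst S ! Suc j) (cmp C (fst T ! j) (fst T ! Suc j) (fst S ! Suc j) (phi (Suc j)) (snd T ! j)) =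
          Sm (fst T ! j) (fst S ! Suc j) (cmp C (fst T ! j) (fst S ! j) (fst S ! Suc j) (snd S ! j) (phi j))"
      using sq2 b a phh[OF j] phh[of j] Smphi[OF j] Smphi[of j] j by (simp add: Sm_cmp)
    hence "cmp C (fst T ! j) (fst T ! Suc j) (fst S ! Suc j) (phi (Suc j)) (snd T ! j) =
          cmp C (fst T ! j) (fst S ! j) (fst S ! Suc j) (snd S ! j) (phi j)"
      by (rule Sm_inj[OF cmp_hom[OF b phh[OF j]] cmp_hom[OF phh[OF jl] a]])
    thus "cmp C (fst T ! j) (fst T ! Suc j) (fst S ! Suc j) (phs ! Suc j) (snd T ! j) =
          cmp C (fst T ! j) (fst S ! j) (fst S ! Suc j) (snd S ! j) (phs ! j)"
      using phs_nth j by simp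
  next
    have nl: "n - 1 < n" "\<not> Suc (n - 1) < n" using n3 by auto
    have tT: "seq_tgt So (fst T) (n-1) = So A1" using nl lT T unfolding seq_tgt_def by simp
    have tS: "seq_tgt So (fst S) (n-1) = So A1" using nl lS unfolding seq_tgt_def A1_A2_def by simp
    have b: "snd T ! (n-1) \<in> hom C (fst T ! (n-1)) (So A1)" using alpha_hom[OF sT nl(1)] tT by simp
    have a: "snd S ! (n-1) \<in> hom C (fst S ! (n-1)) (So A1)" using alpha_hom[OF S nl(1)] tS by simp
    have sq: "cmp C (So (fst T ! (n-1))) (So (So A1)) (So (So A1)) (Sm (So A1) (So A1) (idm C (So A1)))
                 (sg (fst T) (n-1) (Sm (fst T ! (n-1)) (So A1) (snd T ! (n-1)))) =
              cmp C (So (fst T ! (n-1))) (So (fst S ! (n-1))) (So (So A1)) (sg (fst S) (n-1) (Sm (fst S ! (n-1)) (So A1) (snd S ! (n-1)))) (ps ! (n-1))"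
      using mor_last[OF ps(1)] fTT fSS sTT sSS nl n01 tT tS ps(2) T unfolding A1_A2_def by simp
    have sq2: "cmp C (So (fst T ! (n-1))) (So (So A1)) (So (So A1)) (idm C (So (So A1))) (Sm (fst T ! (n-1)) (So A1) (snd T ! (n-1))) =
              cmp C (So (fst T ! (n-1))) (So (fst S ! (n-1))) (So (So A1)) (Sm (fst S ! (n-1)) (So A1) (snd S ! (n-1))) (ps ! (n-1))"
      by (rule unsign[OF Sm_hom[OF b] idm_hom Sm_hom[OF a] psh[OF nl(1)]]) (rule sq[unfolded sg_def tT tS Sm_id])
    have "Sm (fst T ! (n-1)) (So A1) (snd T ! (n-1)) = Sm (fst T ! (n-1)) (So A1) (cmp C (fst T ! (n-1)) (fst S ! (n-1)) (So A1) (snd S ! (n-1)) (phi (n-1)))"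
      using sq2 Sm_hom[OF b] a phh[OF nl(1)] Smphi[OF nl(1)] by (simp add: Sm_cmp id_l)
    hence "snd T ! (n-1) = cmp C (fst T ! (n-1)) (fst S ! (n-1)) (So A1) (snd S ! (n-1)) (phi (n-1))"
      using Sm_inj cmp_hom b a phh[OF nl(1)] by blast
    moreover have "cmp C (fst T ! (n - 1)) (So (fst T ! 0)) (So (fst S ! 0)) (Sm (fst T ! 0) (fst S ! 0) (phs ! 0)) (snd T ! (n - 1)) = snd T ! (n-1)"
      using phs_nth[OF n01(1)] phi0 T b Sm_id id_l unfolding A1_A2_def by simp
    ultimately show "cmp C (fst T ! (n - 1)) (So (fst T ! 0)) (So (fst S ! 0)) (Sm (fst T ! 0) (fst S ! 0) (phs ! 0)) (snd T ! (n - 1)) =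
       cmp C (fst T ! (n - 1)) (fst S ! (n - 1)) (So (fst S ! 0)) (snd S ! (n - 1)) (phs ! (n - 1))"
      using phs_nth[OF nl(1)] unfolding A1_A2_def by simp
  qed
  have wi: "is_weak_iso C So Sm n T S phs"
    unfolding is_weak_iso_def
  proof (intro conjI mor exI[of _ 0])
    show "0 < n" using n01 by simp
    show "is_iso C (fst T ! 0) (fst S ! 0) (phs ! 0)" using phs_nth n01 phi0 T iso_id unfolding A1_A2_def by simp
    show "if Suc 0 < n then is_iso C (fst T ! Suc 0) (fst S ! Suc 0) (phs ! Suc 0)
          else is_iso C (So (fst T ! 0)) (So (fst S ! 0)) (Sm (fst T ! 0) (fst S ! 0) (phs ! 0))"
      using phs_nth n01 phi1 T iso_id unfolding A1_A2_def by simp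
  qed
  show ?thesis using N1a[OF exT exS wi T(1)] .
qed

end

lemma main_thm:
  fixes C :: "('o, 'm) addcat" and So :: "'o \<Rightarrow> 'o" and Sm :: "'o \<Rightarrow> 'o \<Rightarrow> 'm \<Rightarrow> 'm"
    and n :: nat and N :: "('o, 'm) sigseq set"
  assumes "is_additive_category C" and "is_automorphism C So Sm" and "3 \<le> n"
    and "\<forall>S \<in> N. is_sigseq C So n S" and "N1_star C So Sm n N" and "N3 C So Sm n N"
  shows "N2 C So Sm n N \<longleftrightarrow> N2_star C So Sm n N"
proof
  assume "N2 C So Sm n N"
  thus "N2_star C So Sm n N" using assms(4) unfolding N2_def N2_star_def by blast
next
  assume h: "N2_star C So Sm n N"
  interpret acN C So Sm n N using assms h by (unfold_locales) auto
  show "N2 C So Sm n N" unfolding N2_def using back_lem rotN by blast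
qed



theorem theorem3p3:
  fixes C :: "('o, 'm) addcat"
    and So :: "'o \<Rightarrow> 'o" and Sm :: "'o \<Rightarrow> 'o \<Rightarrow> 'm \<Rightarrow> 'm"
    and n :: nat and N :: "('o, 'm) sigseq set"
  assumes "is_additive_category C"
    and "is_automorphism C So Sm"
    and "3 \<le> n"
    and "\<forall>S \<in> N. is_sigseq C So n S"
    and "N1_star C So Sm n N"
    and "N3 C So Sm n N"
  shows "N2 C So Sm n N \<longleftrightarrow> N2_star C So Sm n N"
  using main_thm[OF assms] .

end
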